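(* Let $0\le\beta<1$ and let $f(z)=z+\sum_{n\ge2}a_nz^n$ belong to $\mathcal{K}_{\sigma}(\beta)$. Then \[ |a_2a_4-a_3^2|\le\frac{(1-\beta)^2}{24}\left[\frac{5\beta^2+8\beta-32}{3\beta^2-3\beta-4}\right]. \]
   Context: $\mathbb{U}=\{z\in\mathbb{C}:|z|<1\}$. For analytic $f,g$ on $\mathbb{U}$, $f\prec g$ means there is an analytic $w$ on $\mathbb{U}$ with $w(0)=0$, $|w(z)|<1$, and $f(z)=g(w(z))$. $\sigma$ denotes the class of analytic functions $f(z)=z+\sum_{n\ge2}a_nz^n$ on $\mathbb{U}$ that are univalent in $\mathbb{U}$ and whose inverse $g=f^{-1}$ is also univalent in $\mathbb{U}$. For $0\le\beta<1$, $\mathcal{K}_{\sigma}(\beta)$ (bi-convex functions of order $\beta$) is the set of $f\in\sigma$ with $1+\frac{zf''(z)}{f'(z)}\prec\frac{1+(1-2\beta)z}{1-z}$ ($z\in\mathbb{U}$) and $1+\frac{wg''(w)}{g'(w)}\prec\frac{1+(1-2\beta)w}{1-w}$ ($w\in\mathbb{U}$), where $g=f^{-1}$. *)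

theory Defs
  imports "HOL-Complex_Analysis.Complex_Analysis"
begin

definition subordinate :: "(complex \<Rightarrow> complex) \<Rightarrow> (complex \<Rightarrow> complex) \<Rightarrow> bool" where
  "subordinate p q \<longleftrightarrow>
     (\<exists>w. w holomorphic_on ball 0 1 \<and> w 0 = 0 \<and>
          (\<forall>z\<in>ball 0 1. norm (w z) < 1 \<and> p z = q (w z)))"

definition normalized_univalent :: "(complex \<Rightarrow> complex) \<Rightarrow> bool" where
  "normalized_univalent f \<longleftrightarrow>
     f holomorphic_on ball 0 1 \<and> inj_on f (ball 0 1) \<and> f 0 = 0 \<and> deriv f 0 = 1"

text \<open>g is the (univalent analytic continuation to the unit disc of the) inverse of f:
  g is holomorphic and univalent on the disc and inverts f wherever this makes sense.\<close>
definition is_disc_inverse :: "(complex \<Rightarrow> complex) \<Rightarrow> (complex \<Rightarrow> complex) \<Rightarrow> bool" where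
  "is_disc_inverse f g \<longleftrightarrow>
     g holomorphic_on ball 0 1 \<and> inj_on g (ball 0 1) \<and>
     (\<forall>z\<in>ball 0 1. f z \<in> ball 0 1 \<longrightarrow> g (f z) = z)"

definition bi_univalent :: "(complex \<Rightarrow> complex) \<Rightarrow> bool" where
  "bi_univalent f \<longleftrightarrow> normalized_univalent f \<and> (\<exists>g. is_disc_inverse f g)"

definition bi_convex :: "real \<Rightarrow> (complex \<Rightarrow> complex) \<Rightarrow> bool" where
  "bi_convex \<beta> f \<longleftrightarrow> bi_univalent f \<and>
     subordinate (\<lambda>z. 1 + z * deriv (deriv f) z / deriv f z)
                 (\<lambda>z. (1 + of_real (1 - 2*\<beta>) * z) / (1 - z)) \<and>
     (\<forall>g. is_disc_inverse f g \<longrightarrow>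
        subordinate (\<lambda>w. 1 + w * deriv (deriv g) w / deriv g w)
                    (\<lambda>w. (1 + of_real (1 - 2*\<beta>) * w) / (1 - w)))"

definition coeff0 :: "(complex \<Rightarrow> complex) \<Rightarrow> nat \<Rightarrow> complex" where
  "coeff0 f n = (deriv ^^ n) f 0 / of_nat (fact n)"

end

theory Submission
  imports Defs
begin

lemma fps_mult_nth_2': "fps_nth (f * g) 2 = fps_nth f 0 * fps_nth g 2 + fps_nth f 1 * fps_nth g 1 + fps_nth f 2 * fps_nth g 0"
  by (simp add: fps_mult_nth numeral_2_eq_2)

lemma fps_mult_nth_3': "fps_nth (f * g) 3 = fps_nth f 0 * fps_nth g 3 + fps_nth f 1 * fps_nth g 2 + fps_nth f 2 * fps_nth g 1 + fps_nth f 3 * fps_nth g 0"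
  by (simp add: fps_mult_nth numeral_3_eq_3 numeral_2_eq_2 add.assoc)

lemma fps_eq_from_ev:
  fixes f g :: "complex \<Rightarrow> complex"
  assumes "f has_fps_expansion F" "g has_fps_expansion G"
    and "eventually (\<lambda>z. f z = g z) (nhds 0)"
  shows "F = G"
proof -
  have "g has_fps_expansion F" using has_fps_expansion_cong[OF assms(3), of F F] assms(1) by simp
  then show ?thesis using assms(2) fps_expansion_unique_complex by blast
qed

lemma mobius_ineq:
  fixes a h :: complex
  shows "(norm (1 - cnj a * h))^2 - (norm (h - a))^2 = (1 - (norm a)^2) * (1 - (norm h)^2)"
proof -
  have "complex_of_real ((norm (1 - cnj a * h))^2 - (norm (h - a))^2) =
        complex_of_real ((1 - (norm a)^2) * (1 - (norm h)^2))"
    unfolding of_real_diff of_real_mult of_real_1 complex_norm_square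
    by (simp add: algebra_simps)
  then show ?thesis using of_real_eq_iff by blast
qed

lemma schur_step:
  fixes h :: "complex \<Rightarrow> complex"
  assumes holh: "h holomorphic_on ball 0 1"
    and hlt: "\<And>z. z \<in> ball 0 1 \<Longrightarrow> norm (h z) < 1"
    and hH: "h has_fps_expansion H"
  obtains u U where "u holomorphic_on ball 0 1" "\<And>z. z \<in> ball 0 1 \<Longrightarrow> norm (u z) \<le> 1"
    "u has_fps_expansion U"
    "(1 - cnj (fps_nth H 0) * fps_nth H 0) * fps_nth U 0 = fps_nth H 1"
    "(1 - cnj (fps_nth H 0) * fps_nth H 0) * fps_nth U 1
        = fps_nth H 2 + cnj (fps_nth H 0) * fps_nth H 1 * fps_nth U 0"
proof -
  define a where "a = fps_nth H 0"
  have a0: "a = h 0" using fps_nth_fps_expansion[OF hH, of 0] by (simp add: a_def)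
  have na: "norm a < 1" using hlt[of 0] a0 by simp
  have nlt: "norm (cnj a * h z) < 1" if "z \<in> ball 0 1" for z
  proof -
    have "norm (cnj a * h z) = norm a * norm (h z)" by (simp add: norm_mult)
    also have "\<dots> < 1" using na hlt[OF that]
      by (metis mult_le_one norm_ge_zero order_le_less_trans less_imp_le linorder_not_le mult_strict_mono' mult_less_cancel_right1) 
    finally show ?thesis .
  qed
  have den: "1 - cnj a * h z \<noteq> 0" if "z \<in> ball 0 1" for z
    using nlt[OF that] by auto
  define \<phi> where "\<phi> z = (h z - a) / (1 - cnj a * h z)" for z
  have hol\<phi>: "\<phi> holomorphic_on ball 0 1"
    unfolding \<phi>_def using den by (intro holomorphic_intros holh) auto
  have \<phi>lt: "norm (\<phi> z) < 1" if z: "z \<in> ball 0 1" for z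
  proof -
    have "(norm (1 - cnj a * h z))^2 - (norm (h z - a))^2 > 0"
      unfolding mobius_ineq using na hlt[OF z]
      by (simp add: abs_square_less_1)
    hence "(norm (h z - a))^2 < (norm (1 - cnj a * h z))^2" by simp
    hence "norm (h z - a) < norm (1 - cnj a * h z)"
      using power_less_imp_less_base by fastforce
    then show ?thesis unfolding \<phi>_def using den[OF z]
      by (simp add: norm_divide divide_less_eq)
  qed
  have \<phi>0: "\<phi> 0 = 0" by (simp add: \<phi>_def a0)
  have schw: "norm (\<phi> \<xi>) \<le> norm \<xi>" "norm (deriv \<phi> 0) \<le> 1" if "norm \<xi> < 1" for \<xi>
    using Schwarz_Lemma(1,2)[OF hol\<phi> \<phi>0 _ that] \<phi>lt by auto
  obtain u where holu: "u holomorphic_on ball 0 1"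
    and \<phi>u: "\<And>z. norm z < 1 \<Longrightarrow> \<phi> z = z * u z" and d0: "deriv \<phi> 0 = u 0"
    using Schwarz3[OF hol\<phi> \<phi>0] by blast
  have ule: "norm (u z) \<le> 1" if z: "z \<in> ball 0 1" for z
  proof (cases "z = 0")
    case True then show ?thesis using schw(2)[of 0] d0 by simp
  next
    case False
    have "norm z * norm (u z) \<le> norm z * 1" using schw(1)[of z] \<phi>u[of z] z by (simp add: norm_mult)
    then show ?thesis using False by (simp add: mult_le_cancel_left)
  qed
  define U where "U = fps_expansion u 0"
  have uU: "u has_fps_expansion U" unfolding U_def
    by (rule has_fps_expansion_fps_expansion[OF open_ball _ holu]) simp
  have ev1: "eventually (\<lambda>z. z \<in> ball 0 1) (nhds (0::complex))"
    by (intro eventually_nhds_in_open) auto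
  define \<Phi> where "\<Phi> = fps_expansion \<phi> 0"
  have \<phi>\<Phi>: "\<phi> has_fps_expansion \<Phi>" unfolding \<Phi>_def
    by (rule has_fps_expansion_fps_expansion[OF open_ball _ hol\<phi>]) simp
  have e1: "(\<lambda>z. z * u z) has_fps_expansion fps_X * U"
    by (intro has_fps_expansion_mult has_fps_expansion_fps_X uU)
  have "\<Phi> = fps_X * U"
    by (rule fps_eq_from_ev[OF \<phi>\<Phi> e1]) (use ev1 \<phi>u in \<open>auto elim!: eventually_mono\<close>)
  have e2: "(\<lambda>z. \<phi> z * (1 - cnj a * h z)) has_fps_expansion \<Phi> * (1 - fps_const (cnj a) * H)"
    by (intro has_fps_expansion_mult has_fps_expansion_diff has_fps_expansion_1
          has_fps_expansion_cmult_left \<phi>\<Phi> hH)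
  have e3: "(\<lambda>z. h z - a) has_fps_expansion H - fps_const a"
    by (intro has_fps_expansion_diff has_fps_expansion_const hH)
  have eq: "\<Phi> * (1 - fps_const (cnj a) * H) = H - fps_const a"
    by (rule fps_eq_from_ev[OF e2 e3]) (use ev1 den in \<open>auto elim!: eventually_mono simp: \<phi>_def\<close>)
  have c1: "fps_nth (\<Phi> * (1 - fps_const (cnj a) * H)) 1 = fps_nth (H - fps_const a) 1"
    using eq by simp
  have c2: "fps_nth (\<Phi> * (1 - fps_const (cnj a) * H)) 2 = fps_nth (H - fps_const a) 2"
    using eq by simp
  have P: "fps_nth \<Phi> 0 = 0" "fps_nth \<Phi> 1 = fps_nth U 0" "fps_nth \<Phi> 2 = fps_nth U 1"
    using \<open>\<Phi> = fps_X * U\<close> by (simp_all add: numeral_2_eq_2)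
  show ?thesis
  proof (rule that[OF holu ule uU])
    show "(1 - cnj (fps_nth H 0) * fps_nth H 0) * fps_nth U 0 = fps_nth H 1"
      using c1 P by (simp add: a_def fps_mult_nth_1 algebra_simps)
    show "(1 - cnj (fps_nth H 0) * fps_nth H 0) * fps_nth U 1
        = fps_nth H 2 + cnj (fps_nth H 0) * fps_nth H 1 * fps_nth U 0"
      using c2 P by (simp add: a_def fps_mult_nth_2' fps_mult_nth_1 algebra_simps)
  qed
qed


lemma const_case:
  fixes h :: "complex \<Rightarrow> complex"
  assumes holh: "h holomorphic_on ball 0 1"
    and hle: "\<And>z. z \<in> ball 0 1 \<Longrightarrow> norm (h z) \<le> 1"
    and z0: "z0 \<in> ball 0 1" and h1: "norm (h z0) = 1"
    and hH: "h has_fps_expansion H"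
  shows "H = fps_const (h 0)"
proof -
  have "h constant_on ball 0 1"
    by (rule maximum_modulus_principle[OF holh open_ball connected_ball open_ball subset_refl z0])
       (use hle h1 in auto)
  then obtain c where c: "\<And>z. z \<in> ball 0 1 \<Longrightarrow> h z = c" by (auto simp: constant_on_def)
  have e: "(\<lambda>z. h 0) has_fps_expansion fps_const (h 0)" by simp
  have ev1: "eventually (\<lambda>z. z \<in> ball 0 1) (nhds (0::complex))"
    by (intro eventually_nhds_in_open) auto
  show ?thesis
    by (rule fps_eq_from_ev[OF hH e]) (use ev1 c in \<open>auto elim!: eventually_mono\<close>)
qed

lemma cnj_mult_self: "cnj a * a = complex_of_real ((norm a)^2)"
  by (subst complex_norm_square) (rule mult.commute)

lemma L1:
  fixes h :: "complex \<Rightarrow> complex"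
  assumes holh: "h holomorphic_on ball 0 1"
    and hle: "\<And>z. z \<in> ball 0 1 \<Longrightarrow> norm (h z) \<le> 1"
    and hH: "h has_fps_expansion H"
  shows "norm (fps_nth H 1) \<le> 1 - (norm (fps_nth H 0))^2"
proof (cases "\<exists>z0\<in>ball 0 1. norm (h z0) = 1")
  case True
  then obtain z0 where "z0 \<in> ball 0 1" "norm (h z0) = 1" by blast
  from const_case[OF holh hle this hH] have "H = fps_const (h 0)" .
  moreover have "norm (h 0) \<le> 1" using hle[of 0] by simp
  ultimately show ?thesis by (simp add: abs_square_le_1)
next
  case False
  have hlt: "norm (h z) < 1" if "z \<in> ball 0 1" for z
    using hle[OF that] False that by (meson order_less_le)
  obtain u U where u: "u holomorphic_on ball 0 1" "\<And>z. z \<in> ball 0 1 \<Longrightarrow> norm (u z) \<le> 1"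
    "u has_fps_expansion U"
    "(1 - cnj (fps_nth H 0) * fps_nth H 0) * fps_nth U 0 = fps_nth H 1"
    using schur_step[OF holh hlt hH] by metis
  have U0: "fps_nth U 0 = u 0" using fps_nth_fps_expansion[OF u(3), of 0] by simp
  have nU0: "norm (fps_nth U 0) \<le> 1" using u(2)[of 0] U0 by simp
  have na: "(norm (fps_nth H 0))^2 \<le> 1" using hle[of 0] fps_nth_fps_expansion[OF hH, of 0]
    by (simp add: abs_square_le_1)
  have "norm (fps_nth H 1) = (1 - (norm (fps_nth H 0))^2) * norm (fps_nth U 0)"
  proof -
    have "fps_nth H 1 = complex_of_real (1 - (norm (fps_nth H 0))^2) * fps_nth U 0"
      using u(4) unfolding cnj_mult_self by simp
    then have "norm (fps_nth H 1) = norm (complex_of_real (1 - (norm (fps_nth H 0))^2)) * norm (fps_nth U 0)"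
      by (simp only: norm_mult)
    then show ?thesis using na by (simp only: norm_of_real abs_of_nonneg diff_ge_0_iff_ge)
  qed
  also have "\<dots> \<le> (1 - (norm (fps_nth H 0))^2) * 1"
    using na nU0 by (intro mult_left_mono) auto
  finally show ?thesis by simp
qed


lemma schwarz_coeffs:
  fixes w :: "complex \<Rightarrow> complex"
  assumes holw: "w holomorphic_on ball 0 1" and w0: "w 0 = 0"
    and wlt: "\<And>z. z \<in> ball 0 1 \<Longrightarrow> norm (w z) < 1"
    and wW: "w has_fps_expansion W"
  shows "norm (fps_nth W 1) \<le> 1"
    "norm (fps_nth W 2) \<le> 1 - (norm (fps_nth W 1))^2"
    "norm (fps_nth W 3) \<le> 1 - (norm (fps_nth W 1))^2"
proof -
  have schw: "norm (w \<xi>) \<le> norm \<xi>" "norm (deriv w 0) \<le> 1" if "norm \<xi> < 1" for \<xi>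
    using Schwarz_Lemma(1,2)[OF holw w0 _ that] wlt by auto
  obtain v where holv: "v holomorphic_on ball 0 1"
    and wv: "\<And>z. norm z < 1 \<Longrightarrow> w z = z * v z" and d0: "deriv w 0 = v 0"
    using Schwarz3[OF holw w0] by blast
  have vle: "norm (v z) \<le> 1" if z: "z \<in> ball 0 1" for z
  proof (cases "z = 0")
    case True then show ?thesis using schw(2)[of 0] d0 by simp
  next
    case False
    have "norm z * norm (v z) \<le> norm z * 1" using schw(1)[of z] wv[of z] z by (simp add: norm_mult)
    then show ?thesis using False by (simp add: mult_le_cancel_left)
  qed
  define V where "V = fps_expansion v 0"
  have vV: "v has_fps_expansion V" unfolding V_def
    by (rule has_fps_expansion_fps_expansion[OF open_ball _ holv]) simp
  have ev1: "eventually (\<lambda>z. z \<in> ball 0 1) (nhds (0::complex))"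
    by (intro eventually_nhds_in_open) auto
  have e1: "(\<lambda>z. z * v z) has_fps_expansion fps_X * V"
    by (intro has_fps_expansion_mult has_fps_expansion_fps_X vV)
  have WV: "W = fps_X * V"
    by (rule fps_eq_from_ev[OF wW e1]) (use ev1 wv in \<open>auto elim!: eventually_mono\<close>)
  have W123: "fps_nth W 1 = fps_nth V 0" "fps_nth W 2 = fps_nth V 1" "fps_nth W 3 = fps_nth V 2"
    by (simp_all add: WV numeral_2_eq_2 numeral_3_eq_3)
  have V0: "fps_nth V 0 = v 0" using fps_nth_fps_expansion[OF vV, of 0] by simp
  have nV0: "norm (fps_nth V 0) \<le> 1" using vle[of 0] V0 by simp
  have nV0sq: "(norm (fps_nth V 0))^2 \<le> 1" using nV0 by (simp add: abs_square_le_1)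
  show "norm (fps_nth W 1) \<le> 1" using nV0 W123 by simp
  show "norm (fps_nth W 2) \<le> 1 - (norm (fps_nth W 1))^2"
    using L1[OF holv vle vV] W123 by simp
  show "norm (fps_nth W 3) \<le> 1 - (norm (fps_nth W 1))^2"
  proof (cases "\<exists>z0\<in>ball 0 1. norm (v z0) = 1")
    case True
    then obtain z0 where "z0 \<in> ball 0 1" "norm (v z0) = 1" by blast
    from const_case[OF holv vle this vV] have "V = fps_const (v 0)" .
    then show ?thesis using W123 nV0sq by simp
  next
    case False
    have vlt: "norm (v z) < 1" if "z \<in> ball 0 1" for z
      using vle[OF that] False that by (meson order_less_le)
    obtain u U where u: "u holomorphic_on ball 0 1" "\<And>z. z \<in> ball 0 1 \<Longrightarrow> norm (u z) \<le> 1"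
      "u has_fps_expansion U"
      "(1 - cnj (fps_nth V 0) * fps_nth V 0) * fps_nth U 0 = fps_nth V 1"
      "(1 - cnj (fps_nth V 0) * fps_nth V 0) * fps_nth U 1
        = fps_nth V 2 + cnj (fps_nth V 0) * fps_nth V 1 * fps_nth U 0"
      using schur_step[OF holv vlt vV] by metis
    define a where "a = fps_nth V 0"
    define r where "r = 1 - (norm a)^2"
    have r0: "0 \<le> r" using nV0sq by (simp add: r_def a_def)
    have U0: "fps_nth U 0 = u 0" using fps_nth_fps_expansion[OF u(3), of 0] by simp
    have nU0: "norm (fps_nth U 0) \<le> 1" using u(2)[of 0] U0 by simp
    have nU1: "norm (fps_nth U 1) \<le> 1 - (norm (fps_nth U 0))^2" using L1[OF u(1,2,3)] .
    have rr: "1 - cnj a * a = complex_of_real r" unfolding r_def cnj_mult_self by simp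
    have "fps_nth V 2 = complex_of_real r * (fps_nth U 1 - cnj a * (fps_nth U 0)^2)"
      using u(4,5) unfolding a_def[symmetric] rr by (simp add: algebra_simps power2_eq_square)
    hence "norm (fps_nth V 2) = r * norm (fps_nth U 1 - cnj a * (fps_nth U 0)^2)"
      using r0 by (simp add: norm_mult)
    also have "\<dots> \<le> r * (norm (fps_nth U 1) + norm a * (norm (fps_nth U 0))^2)"
      using r0 by (intro mult_left_mono) (auto intro: order_trans[OF norm_triangle_ineq4] simp: norm_mult norm_power)
    also have "\<dots> \<le> r * 1"
    proof (intro mult_left_mono r0)
      have "norm a \<le> 1" using nV0 a_def by simp
      hence "norm a * (norm (fps_nth U 0))^2 \<le> 1 * (norm (fps_nth U 0))^2"
        by (intro mult_right_mono) auto
      thus "norm (fps_nth U 1) + norm a * (norm (fps_nth U 0))^2 \<le> 1" using nU1 by simp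
    qed
    finally show ?thesis using W123 by (simp add: r_def a_def)
  qed
qed

lemma poly_bound:
  fixes x y t k1 k2 :: real
  assumes "0 \<le> x" "x \<le> 1" "0 \<le> y" "y \<le> 1 - x^2" "0 \<le> t" "t \<le> 1 - x^2"
    "0 \<le> k1" "k1 \<le> 1/6" "0 \<le> k2" "k2 \<le> 1/16"
  shows "x*t/6 + y^2/9 + k1*x^2*y + k2*x^4 \<le> 19/96"
proof -
  have "x*t/6 \<le> x*(1-x^2)/6" using assms by (intro divide_right_mono mult_left_mono) auto
  moreover have "y^2/9 \<le> (1-x^2)^2/9" using assms by (intro divide_right_mono power_mono) auto
  moreover have "k1*x^2*y \<le> (1/6)*x^2*(1-x^2)" using assms by (intro mult_mono) auto
  moreover have "k2*x^4 \<le> (1/16)*x^4" using assms by (intro mult_right_mono) auto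
  moreover have "x*(1-x^2)/6 + (1-x^2)^2/9 + (1/6)*x^2*(1-x^2) + (1/16)*x^4 \<le> 19/96"
  proof -
    have e: "x*(1-x^2)/6 + (1-x^2)^2/9 + (1/6)*x^2*(1-x^2) + (1/16)*x^4
        = 1/9 + x/6 - x^2/18 - x^3/6 + x^4/144"
      by (simp add: power2_eq_square power3_eq_cube power4_eq_xxxx field_simps)
    have c1: "0 \<le> (x - 1/2)^2 * (x + 1)" using assms by simp
    have c1e: "(x - 1/2)^2 * (x + 1) = x^3 - 3/4*x + 1/4"
      by (simp add: power2_eq_square power3_eq_cube algebra_simps)
    have c2: "x^4 \<le> x^3"
    proof -
      have "x^3 * x \<le> x^3 * 1" using assms by (intro mult_left_mono) auto
      thus ?thesis by (simp add: power4_eq_xxxx power3_eq_cube)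
    qed
    have q: "0 \<le> (x - 27/64)^2" by simp
    have qe: "(x - 27/64)^2 = x^2 - 27/32*x + 729/4096"
      by (simp add: power2_eq_square algebra_simps)
    show ?thesis using e c1 c1e c2 q qe by linarith
  qed
  ultimately show ?thesis by linarith
qed

lemma rhs_bound:
  fixes b :: real
  assumes "0 \<le> b" "b < 1"
  shows "(1-b)^2 * (19/96) \<le> (1 - b)^2 / 24 * ((5*b^2 + 8*b - 32) / (3*b^2 - 3*b - 4))"
proof -
  have b2: "b^2 \<le> b" using assms by (simp add: power2_eq_square mult_left_le_one_le)
  have d: "3*b^2 - 3*b - 4 < 0" using assms b2 by linarith
  have p: "0 \<le> (1-b)*(52-37*b)" using assms by (intro mult_nonneg_nonneg) auto
  have pe: "(1-b)*(52-37*b) = 37*b^2 - 89*b + 52" by (simp add: power2_eq_square algebra_simps)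
  define Q where "Q = (5*b^2 + 8*b - 32) / (3*b^2 - 3*b - 4)"
  have "19/4 \<le> Q"
    using d p pe unfolding Q_def by (simp add: le_divide_eq) 
  then have "(1-b)^2 * (19/4) \<le> (1-b)^2 * Q"
    by (intro mult_left_mono) auto
  then have "((1-b)^2 * (19/4)) / 24 \<le> ((1-b)^2 * Q) / 24"
    by (rule divide_right_mono) simp
  moreover have "((1-b)^2 * (19/4)) / 24 = (1-b)^2 * (19/96)" by simp
  moreover have "((1-b)^2 * Q) / 24 = (1-b)^2 / 24 * Q" by simp
  ultimately show ?thesis unfolding Q_def by metis
qed

theorem corollary4p5:
  fixes \<beta> :: real and f :: "complex \<Rightarrow> complex"
  assumes "0 \<le> \<beta>" and "\<beta> < 1"
    and "bi_convex \<beta> f"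
  shows "norm (coeff0 f 2 * coeff0 f 4 - (coeff0 f 3)^2)
           \<le> (1 - \<beta>)^2 / 24 * ((5*\<beta>^2 + 8*\<beta> - 32) / (3*\<beta>^2 - 3*\<beta> - 4))"
proof -
  have bu: "bi_univalent f" and sub: "subordinate (\<lambda>z. 1 + z * deriv (deriv f) z / deriv f z)
                 (\<lambda>z. (1 + of_real (1 - 2*\<beta>) * z) / (1 - z))"
    using assms(3) unfolding bi_convex_def by auto
  from bu have holf: "f holomorphic_on ball 0 1" and d1: "deriv f 0 = 1"
    by (auto simp: bi_univalent_def normalized_univalent_def)
  define c where "c = complex_of_real (1 - 2*\<beta>)"
  from sub obtain w where holw: "w holomorphic_on ball 0 1" and w0: "w 0 = 0"
    and wp: "\<And>z. z \<in> ball 0 1 \<Longrightarrow> norm (w z) < 1 \<and>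
       1 + z * deriv (deriv f) z / deriv f z = (1 + c * w z) / (1 - w z)"
    unfolding subordinate_def c_def by blast
  define F where "F = fps_expansion f 0"
  have fF: "f has_fps_expansion F" unfolding F_def
    by (rule has_fps_expansion_fps_expansion[OF open_ball _ holf]) simp
  define W where "W = fps_expansion w 0"
  have wW: "w has_fps_expansion W" unfolding W_def
    by (rule has_fps_expansion_fps_expansion[OF open_ball _ holw]) simp
  have coeff: "coeff0 f n = fps_nth F n" for n
    by (simp add: coeff0_def fps_nth_fps_expansion[OF fF])
  have F1: "fps_nth F 1 = 1" using fps_nth_fps_expansion[OF fF, of 1] d1 by simp
  have W0: "fps_nth W 0 = 0" using fps_nth_fps_expansion[OF wW, of 0] w0 by simp
  have holD: "deriv f holomorphic_on ball 0 1" by (rule holomorphic_deriv[OF holf open_ball])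
  have "isCont (deriv f) 0"
    using holomorphic_on_imp_continuous_on[OF holD] continuous_on_eq_continuous_at[OF open_ball]
    by (meson centre_in_ball zero_less_one)
  then have "(deriv f \<longlongrightarrow> deriv f 0) (nhds 0)"
    by (simp add: isCont_def tendsto_at_iff_tendsto_nhds)
  then have evD: "eventually (\<lambda>z. deriv f z \<noteq> 0) (nhds 0)"
    using tendsto_imp_eventually_ne d1 by fastforce
  have ev1: "eventually (\<lambda>z. z \<in> ball 0 1) (nhds (0::complex))"
    by (intro eventually_nhds_in_open) auto
  have ev: "eventually (\<lambda>z. (deriv f z + z * deriv (deriv f) z) * (1 - w z)
                 = deriv f z * (1 + c * w z)) (nhds 0)"
    using evD ev1
  proof eventually_elim
    case (elim z)
    have wz: "norm (w z) < 1" and pz: "1 + z * deriv (deriv f) z / deriv f z = (1 + c * w z) / (1 - w z)"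
      using wp[OF elim(2)] by auto
    have w1: "1 - w z \<noteq> 0" using wz by auto
    have "1 + z * deriv (deriv f) z / deriv f z = (deriv f z + z * deriv (deriv f) z) / deriv f z"
      using elim(1) by (simp add: field_simps)
    with pz have "(deriv f z + z * deriv (deriv f) z) / deriv f z = (1 + c * w z) / (1 - w z)" by simp
    then have "(deriv f z + z * deriv (deriv f) z) * (1 - w z) = (1 + c * w z) * deriv f z"
      using frac_eq_eq[OF elim(1) w1] by simp
    then show ?case by (simp add: mult.commute)
  qed
  have e2: "(\<lambda>z. (deriv f z + z * deriv (deriv f) z) * (1 - w z)) has_fps_expansion
            (fps_deriv F + fps_X * fps_deriv (fps_deriv F)) * (1 - W)"
    by (intro has_fps_expansion_mult has_fps_expansion_add has_fps_expansion_diff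
          has_fps_expansion_1 has_fps_expansion_deriv has_fps_expansion_fps_X fF wW)
  have e3: "(\<lambda>z. deriv f z * (1 + c * w z)) has_fps_expansion
            fps_deriv F * (1 + fps_const c * W)"
    by (intro has_fps_expansion_mult has_fps_expansion_add has_fps_expansion_cmult_left
          has_fps_expansion_1 has_fps_expansion_deriv fF wW)
  have E: "(fps_deriv F + fps_X * fps_deriv (fps_deriv F)) * (1 - W) = fps_deriv F * (1 + fps_const c * W)"
    by (rule fps_eq_from_ev[OF e2 e3 ev])
  define a2 where "a2 = fps_nth F 2"
  define a3 where "a3 = fps_nth F 3"
  define a4 where "a4 = fps_nth F 4"
  define w1 where "w1 = fps_nth W 1"
  define w2 where "w2 = fps_nth W 2"
  define w3 where "w3 = fps_nth W 3"
  have q1: "4*a2 - w1 = 2*a2 + c*w1"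
    using arg_cong[OF E, of "\<lambda>G. fps_nth G 1"] F1 W0
    by (simp add: fps_mult_nth_1 a2_def w1_def numeral_2_eq_2 algebra_simps; algebra)
  have r2: "fps_nth ((fps_deriv F + fps_X * fps_deriv (fps_deriv F)) * (1 - W)) 2
      = fps_nth (fps_deriv F * (1 + fps_const c * W)) 2" using E by simp
  have q2: "9*a3 - 4*a2*w1 - w2 = 3*a3 + c*(2*a2*w1 + w2)"
    using r2 F1 W0 unfolding fps_mult_nth_2'
    by (simp add: a2_def a3_def w1_def w2_def numeral_3_eq_3 numeral_2_eq_2 algebra_simps)
  have r3: "fps_nth ((fps_deriv F + fps_X * fps_deriv (fps_deriv F)) * (1 - W)) 3
      = fps_nth (fps_deriv F * (1 + fps_const c * W)) 3" using E by simp
  have q3: "16*a4 - 9*a3*w1 - 4*a2*w2 - w3 = 4*a4 + c*(3*a3*w1 + 2*a2*w2 + w3)"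
    using r3 F1 W0 unfolding fps_mult_nth_3'
    by (simp add: a2_def a3_def a4_def w1_def w2_def w3_def eval_nat_numeral algebra_simps)
  define gr where "gr = 1 - \<beta>"
  define g where "g = complex_of_real gr"
  have gr0: "0 < gr" "gr \<le> 1" using assms(1,2) by (auto simp: gr_def)
  have cg: "c = 2*g - 1" by (simp add: c_def g_def gr_def)
  have ha2': "2*a2 = 2*(g*w1)" using q1 cg by algebra
  hence ha2: "a2 = g*w1" by simp
  have ha3'': "6*a3 = 2*g*(w2 + (1+2*g)*w1^2)" using q2 ha2 cg by algebra
  have ha3': "3*a3 = g*(w2 + (1+2*g)*w1^2)"
  proof -
    have "2*(3*a3) = 2*(g*(w2 + (1+2*g)*w1^2))" using ha3'' by (simp add: algebra_simps)
    thus ?thesis by simp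
  qed
  hence ha3: "a3 = g*(w2 + (1+2*g)*w1^2)/3" by (simp add: field_simps)
  have ha4': "12*a4 = 2*g*w3 + (4*g+6*g^2)*w1*w2 + (2*g+6*g^2+4*g^3)*w1^3"
    using q3 ha2 ha3' cg by algebra
  hence ha4: "a4 = (2*g*w3 + (4*g+6*g^2)*w1*w2 + (2*g+6*g^2+4*g^3)*w1^3)/12" by (simp add: field_simps)
  define T where "T = w1*w3/6 - w2^2/9 + (2+g)/18*w1^2*w2 + (1-g)*(1+2*g)/18*w1^4"
  have HT: "a2*a4 - a3^2 = g^2 * T"
    unfolding ha2 ha3 ha4 T_def
    by (simp add: field_simps power2_eq_square power3_eq_cube power4_eq_xxxx)
  define x where "x = norm w1"
  define y where "y = norm w2"
  define t where "t = norm w3"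
  define k1 where "k1 = (2+gr)/18"
  define k2 where "k2 = (1-gr)*(1+2*gr)/18"
  have wlt: "\<And>z. z \<in> ball 0 1 \<Longrightarrow> norm (w z) < 1" using wp by blast
  note sc = schwarz_coeffs[OF holw w0 wlt wW]
  have xb: "0 \<le> x" "x \<le> 1" using sc(1) by (auto simp: x_def w1_def)
  have yb: "0 \<le> y" "y \<le> 1 - x^2" using sc(2) by (auto simp: x_def y_def w1_def w2_def)
  have tb: "0 \<le> t" "t \<le> 1 - x^2" using sc(3) by (auto simp: x_def t_def w1_def w3_def)
  have k1b: "0 \<le> k1" "k1 \<le> 1/6" using gr0 by (auto simp: k1_def)
  have k2b: "0 \<le> k2" "k2 \<le> 1/16"
  proof -
    show "0 \<le> k2" using gr0 by (auto simp: k2_def)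
    have "0 \<le> 2*(gr - 1/4)^2" by simp
    moreover have "2*(gr - 1/4)^2 = 9/8 - (1-gr)*(1+2*gr)" by (simp add: power2_eq_square algebra_simps)
    ultimately show "k2 \<le> 1/16" by (simp add: k2_def)
  qed
  have Tk: "T = w1*w3/6 - w2^2/9 + complex_of_real k1*w1^2*w2 + complex_of_real k2*w1^4"
    by (simp add: T_def k1_def k2_def g_def)
  have "norm T \<le> norm (w1*w3/6) + norm (w2^2/9) + norm (complex_of_real k1*w1^2*w2)
          + norm (complex_of_real k2*w1^4)"
    unfolding Tk
    by (rule order_trans[OF norm_triangle_ineq] add_mono order_trans[OF norm_triangle_ineq] 
        order_trans[OF norm_triangle_ineq4] order_refl)+
  also have "\<dots> = x*t/6 + y^2/9 + k1*x^2*y + k2*x^4"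
    using k1b k2b by (simp add: x_def y_def t_def norm_mult norm_divide norm_power)
  also have "\<dots> \<le> 19/96" by (rule poly_bound[OF xb yb tb k1b k2b])
  finally have nT: "norm T \<le> 19/96" .
  have "norm (coeff0 f 2 * coeff0 f 4 - (coeff0 f 3)^2) = norm (a2*a4 - a3^2)"
    by (simp add: coeff a2_def a3_def a4_def)
  also have "\<dots> = gr^2 * norm T" using gr0 by (simp add: HT norm_mult norm_power g_def)
  also have "\<dots> \<le> gr^2 * (19/96)" using nT by (intro mult_left_mono) auto
  also have "\<dots> \<le> (1 - \<beta>)^2 / 24 * ((5*\<beta>^2 + 8*\<beta> - 32) / (3*\<beta>^2 - 3*\<beta> - 4))"
    using rhs_bound[OF assms(1,2)] by (simp add: gr_def)
  finally show ?thesis .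
qed

end
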